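(* Let $a>0$ and assume that for every $t\in[0,T]$, $(b,\Sigma,F)\in\Theta_t$ implies $b^T\Sigma^{-1}b\le2q_t(1-\log q_t)$. For any $\theta\in\Theta$ and $\Pi\in\mathfrak A^\Pi_0$, the maximizer of $D\mapsto H(\Pi,D,\theta)$ over $\mathfrak A^D_0$ is $D^*_t=q_t\int_t^Th_s^{\theta_s}(\Pi_s)ds$, $t\in[0,T]$, and the maximum value is \[ H(\Pi,D^*,\theta)=\frac1a\Big(1-(T+1)\exp\Big(-\frac a{T+1}\int_0^Th_s^{\theta_s}(\Pi_s)ds\Big)\Big). \]
   Context: Fix $T>0$, $d\ge1$, $\varepsilon\in(0,2]$. Let $\mathbb{S}^d_+$ be the symmetric positive definite $d\times d$ matrices, $\mathcal L$ the Lévy measures on $\mathbb{R}^d$, with $d^\varepsilon_{\mathcal L}(\mu,\nu)=\sup\int f\,d(\tilde\mu-\tilde\nu)$, $\tilde\mu(A)=\int_A(|z|^{2-\varepsilon}\wedge1)\mu(dz)$, sup over bounded continuous $f$ with $\sup_{z\neq\hat z}[|f(z)|\vee|f(z)-f(\hat z)|/|z-\hat z|^{\varepsilon\wedge1}]\le1$. $\mathcal C\subset\mathbb{R}^d\times\mathbb{S}^d_+\times\mathcal L$ is compact for $d_{\mathcal C}=|y-\hat y|\vee\|M-\hat M\|_2\vee d^\varepsilon_{\mathcal L}(\mu,\hat\mu)$; $\Theta:[0,T]\twoheadrightarrow\mathcal C$ is a weakly measurable correspondence with closed convex values, and $\Theta$ also denotes the set of Borel $\theta:[0,T]\to\mathcal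 C$ with $\theta_t\in\Theta_t$. Assume $\mathbf S_t=\bigcup_{(y,M,\mu)\in\Theta_t}\mathrm{supp}(\mu)$ is closed, there is $\kappa_t>0$ with $\{|z|\le\kappa_t^{-1}\}\subseteq\mathrm{Conv}(\mathbf S_t\cup\{0\})\subseteq\{|z|\le\kappa_t\}$, and $|y|\vee\|M\|_2\vee d^\varepsilon_{\mathcal L}(\mu,0)\le\kappa_t$ on $\Theta_t$. $U(x)=-e^{-ax}/a$, $q_t=(T-t+1)^{-1}$; $\mathfrak A^\Pi_0$ = Borel $\Pi:[0,T]\to\mathbb{R}^d$, $\mathfrak A^D_0$ = Borel $D:[0,T]\to\mathbb{R}$. Local kernel $h_t^{(y,M,\mu)}(x)=x^Ty-\frac12aq_tx^TMx+\int(\frac{e^{-aq_tx^Tz}}{-aq_t}+\frac1{aq_t}-x^Tz)\mu(dz)$. Global kernel $H(\Pi,D,\theta)=\int_0^T\exp\big(\int_0^t-aq_s(h_s^{\theta_s}(\Pi_s)-D_s)ds\big)\big(q_t(h_t^{\theta_t}(\Pi_t)-D_t)+U(D_t)\big)dt$. *)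

theory Defs
  imports "HOL-Analysis.Analysis"
begin

text \<open>Triples (y, M, mu): drift vector, covariance matrix, Levy measure on R^d,
  where R^d is rendered as real^'n for a finite index type 'n.\<close>

type_synonym 'n triple = "(real^'n) \<times> (real^'n^'n) \<times> (real^'n) measure"

definition qf :: "real \<Rightarrow> real \<Rightarrow> real" where
  "qf T t = 1 / (T - t + 1)"

definition Uexp :: "real \<Rightarrow> real \<Rightarrow> real" where
  "Uexp a x = - exp (- a * x) / a"

definition tilde :: "real \<Rightarrow> (real^'n::finite) measure \<Rightarrow> (real^'n) measure" where
  "tilde eps mu = density mu (\<lambda>z. ennreal (min (norm z powr (2 - eps)) 1))"

text \<open>Levy measures on R^d (for which tilde mu is finite, so that d_L is defined).\<close>
definition levy_eps :: "real \<Rightarrow> (real^'n::finite) measure \<Rightarrow> bool" where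
  "levy_eps eps mu \<longleftrightarrow> sets mu = sets borel \<and> emeasure mu {0} = 0
     \<and> (\<integral>\<^sup>+ z. ennreal (min ((norm z)\<^sup>2) 1) \<partial>mu) < \<infinity>
     \<and> emeasure (tilde eps mu) (space mu) < \<infinity>"

definition test_fun :: "real \<Rightarrow> (real^'n \<Rightarrow> real) \<Rightarrow> bool" where
  "test_fun eps f \<longleftrightarrow> continuous_on UNIV f \<and> bounded (range f)
     \<and> (\<forall>z. \<bar>f z\<bar> \<le> 1)
     \<and> (\<forall>z z'. z \<noteq> z' \<longrightarrow> \<bar>f z - f z'\<bar> \<le> dist z z' powr (min eps 1))"

definition dL :: "real \<Rightarrow> (real^'n::finite) measure \<Rightarrow> (real^'n) measure \<Rightarrow> real" where
  "dL eps mu nu = (SUP f \<in> {f. test_fun eps f}.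
      (\<integral>z. f z \<partial>(tilde eps mu)) - (\<integral>z. f z \<partial>(tilde eps nu)))"

definition mnorm2 :: "real^'n^'n \<Rightarrow> real" where
  "mnorm2 M = onorm (\<lambda>x. M *v x)"

definition sym_pd :: "real^'n^'n \<Rightarrow> bool" where
  "sym_pd M \<longleftrightarrow> transpose M = M \<and> (\<forall>x. x \<noteq> 0 \<longrightarrow> x \<bullet> (M *v x) > 0)"

definition dC :: "real \<Rightarrow> ('n::finite) triple \<Rightarrow> ('n::finite) triple \<Rightarrow> real" where
  "dC eps p p' = max (dist (fst p) (fst p'))
      (max (mnorm2 (fst (snd p) - fst (snd p'))) (dL eps (snd (snd p)) (snd (snd p'))))"

definition Cspace :: "real \<Rightarrow> ('n::finite) triple set" where
  "Cspace eps = {(y, M, mu). sym_pd M \<and> levy_eps eps mu}"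

definition dC_open :: "real \<Rightarrow> ('n::finite) triple set \<Rightarrow> ('n::finite) triple set \<Rightarrow> bool" where
  "dC_open eps C U \<longleftrightarrow> U \<subseteq> C \<and>
     (\<forall>p\<in>U. \<exists>r>0. \<forall>p'\<in>C. dC eps p p' < r \<longrightarrow> p' \<in> U)"

definition dC_compact :: "real \<Rightarrow> ('n::finite) triple set \<Rightarrow> bool" where
  "dC_compact eps C \<longleftrightarrow> (\<forall>(y, M, mu)\<in>C. sym_pd M \<and> levy_eps eps mu) \<and>
     (\<forall>s::nat \<Rightarrow> 'n triple. (\<forall>n. s n \<in> C) \<longrightarrow>
        (\<exists>(r::nat \<Rightarrow> nat) p. strict_mono r \<and> p \<in> C \<and> (\<lambda>n. dC eps (s (r n)) p) \<longlonglongrightarrow> 0))"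

definition is_mix :: "real \<Rightarrow> ('n::finite) triple \<Rightarrow> ('n::finite) triple \<Rightarrow> ('n::finite) triple \<Rightarrow> bool" where
  "is_mix lam p p' r \<longleftrightarrow>
     fst r = lam *\<^sub>R fst p + (1 - lam) *\<^sub>R fst p' \<and>
     fst (snd r) = lam *\<^sub>R fst (snd p) + (1 - lam) *\<^sub>R fst (snd p') \<and>
     sets (snd (snd r)) = sets borel \<and>
     (\<forall>A\<in>sets borel. emeasure (snd (snd r)) A =
        ennreal lam * emeasure (snd (snd p)) A + ennreal (1 - lam) * emeasure (snd (snd p')) A)"

definition triple_convex :: "('n::finite) triple set \<Rightarrow> bool" where
  "triple_convex K \<longleftrightarrow> (\<forall>p\<in>K. \<forall>p'\<in>K. \<forall>lam\<in>{0..1}. \<forall>r. is_mix lam p p' r \<longrightarrow> r \<in> K)"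

definition supp :: "(real^'n::finite) measure \<Rightarrow> (real^'n) set" where
  "supp mu = {z. \<forall>U. open U \<longrightarrow> z \<in> U \<longrightarrow> emeasure mu U > 0}"

definition Sset :: "(real \<Rightarrow> ('n::finite) triple set) \<Rightarrow> real \<Rightarrow> (real^'n) set" where
  "Sset Theta t = (\<Union>p\<in>Theta t. supp (snd (snd p)))"

definition standing :: "real \<Rightarrow> real \<Rightarrow> ('n::finite) triple set \<Rightarrow> (real \<Rightarrow> ('n::finite) triple set)
    \<Rightarrow> (real \<Rightarrow> real) \<Rightarrow> bool" where
  "standing eps T C Theta kappa \<longleftrightarrow>
     T > 0 \<and> 0 < eps \<and> eps \<le> 2 \<and> dC_compact eps C \<and>
     (\<forall>t\<in>{0..T}.
        Theta t \<noteq> {} \<and> Theta t \<subseteq> C \<and>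
        dC_open eps C (C - Theta t) \<and> triple_convex (Theta t) \<and>
        closed (Sset Theta t) \<and> kappa t > 0 \<and>
        cball 0 (1 / kappa t) \<subseteq> convex hull (Sset Theta t \<union> {0}) \<and>
        convex hull (Sset Theta t \<union> {0}) \<subseteq> cball 0 (kappa t) \<and>
        (\<forall>(y, M, mu)\<in>Theta t. norm y \<le> kappa t \<and> mnorm2 M \<le> kappa t
            \<and> dL eps mu (null_measure borel) \<le> kappa t)) \<and>
     (\<forall>U. dC_open eps C U \<longrightarrow> {t\<in>{0..T}. Theta t \<inter> U \<noteq> {}} \<in> sets borel)"

definition theta_sel :: "real \<Rightarrow> real \<Rightarrow> ('n::finite) triple set \<Rightarrow> (real \<Rightarrow> ('n::finite) triple set)
    \<Rightarrow> (real \<Rightarrow> ('n::finite) triple) \<Rightarrow> bool" where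
  "theta_sel eps T C Theta theta \<longleftrightarrow>
     (\<forall>t\<in>{0..T}. theta t \<in> Theta t) \<and>
     (\<forall>U. dC_open eps C U \<longrightarrow> {t\<in>{0..T}. theta t \<in> U} \<in> sets borel)"

definition hloc :: "real \<Rightarrow> real \<Rightarrow> real \<Rightarrow> ('n::finite) triple \<Rightarrow> real^'n \<Rightarrow> real" where
  "hloc a T t p x = (case p of (y, M, mu) \<Rightarrow>
      x \<bullet> y - 1/2 * a * qf T t * (x \<bullet> (M *v x))
      + (\<integral>z. exp (- a * qf T t * (x \<bullet> z)) / (- a * qf T t) + 1 / (a * qf T t) - x \<bullet> z \<partial>mu))"

definition inner_int :: "real \<Rightarrow> real \<Rightarrow> (real \<Rightarrow> real^'n) \<Rightarrow> (real \<Rightarrow> real) \<Rightarrow> (real \<Rightarrow> ('n::finite) triple) \<Rightarrow> real \<Rightarrow> real" where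
  "inner_int a T Pol D theta s = - a * qf T s * (hloc a T s (theta s) (Pol s) - D s)"

definition outer_int :: "real \<Rightarrow> real \<Rightarrow> (real \<Rightarrow> real^'n) \<Rightarrow> (real \<Rightarrow> real) \<Rightarrow> (real \<Rightarrow> ('n::finite) triple) \<Rightarrow> real \<Rightarrow> real" where
  "outer_int a T Pol D theta t =
     exp (LBINT s:{0..t}. inner_int a T Pol D theta s)
     * (qf T t * (hloc a T t (theta t) (Pol t) - D t) + Uexp a (D t))"

definition Hglob :: "real \<Rightarrow> real \<Rightarrow> (real \<Rightarrow> real^'n) \<Rightarrow> (real \<Rightarrow> real) \<Rightarrow> (real \<Rightarrow> ('n::finite) triple) \<Rightarrow> real" where
  "Hglob a T Pol D theta = (LBINT t:{0..T}. outer_int a T Pol D theta t)"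

definition admissible_D :: "real \<Rightarrow> real \<Rightarrow> (real \<Rightarrow> real^'n) \<Rightarrow> (real \<Rightarrow> real) \<Rightarrow> (real \<Rightarrow> ('n::finite) triple) \<Rightarrow> bool" where
  "admissible_D a T Pol D theta \<longleftrightarrow>
     D \<in> borel_measurable (restrict_space borel {0..T}) \<and>
     set_integrable lborel {0..T} (inner_int a T Pol D theta) \<and>
     set_integrable lborel {0..T} (outer_int a T Pol D theta)"

end

theory Submission
  imports Defs
begin

lemma prod_integrable:
  fixes f h :: "real \<Rightarrow> real"
  assumes f: "integrable lborel f" and h: "integrable lborel h"
  shows "integrable (lborel \<Otimes>\<^sub>M lborel) (\<lambda>(x,y). f x * h y)"
proof (rule lborel_pair.Fubini_integrable)
  show "(\<lambda>(x,y). f x * h y) \<in> borel_measurable (lborel \<Otimes>\<^sub>M lborel)"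
    using f h by measurable
  have "(\<lambda>x. \<integral>y. norm (f x * h y) \<partial>lborel) = (\<lambda>x. norm (f x) * (\<integral>y. norm (h y) \<partial>lborel))"
    by (simp add: abs_mult)
  then show "integrable lborel (\<lambda>x. \<integral>y. norm ((\<lambda>(x,y). f x * h y) (x, y)) \<partial>lborel)"
    using f by simp
  show "AE x in lborel. integrable lborel (\<lambda>y. (\<lambda>(x,y). f x * h y) (x, y))"
    using h by simp
qed

lemma ibp_core:
  fixes f h :: "real \<Rightarrow> real"
  assumes f[measurable]: "integrable lborel f" and h[measurable]: "integrable lborel h"
  shows "(\<integral>x. f x * (\<integral>y. (if y \<le> x then h y else 0) \<partial>lborel) + h x * (\<integral>y. (if y \<le> x then f y else 0) \<partial>lborel) \<partial>lborel)
     = (\<integral>x. f x \<partial>lborel) * (\<integral>x. h x \<partial>lborel)"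
proof -
  have fm[measurable]: "f \<in> borel_measurable borel" "h \<in> borel_measurable borel" using f h by auto
  define p1 where "p1 x y = f x * (if y \<le> x then h y else 0)" for x y :: real
  define p2 where "p2 x y = (if x < y then f x else 0) * h y" for x y :: real
  have P: "integrable (lborel \<Otimes>\<^sub>M lborel) (\<lambda>(x,y). f x * h y)"
    by (rule prod_integrable[OF f h])
  have P1: "integrable (lborel \<Otimes>\<^sub>M lborel) (case_prod p1)"
    unfolding p1_def by (rule Bochner_Integration.integrable_bound[OF P]) (auto simp: abs_mult)
  have P2: "integrable (lborel \<Otimes>\<^sub>M lborel) (case_prod p2)"
    unfolding p2_def by (rule Bochner_Integration.integrable_bound[OF P]) (auto simp: abs_mult)
  have i1: "integrable lborel (\<lambda>y. p1 x y)" for x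
    unfolding p1_def by (rule integrable_mult_right) (rule Bochner_Integration.integrable_bound[OF h], auto)
  have i2: "integrable lborel (\<lambda>y. p2 x y)" for x
    unfolding p2_def
    by (rule Bochner_Integration.integrable_bound[of _ "\<lambda>y. \<bar>f x\<bar> * h y"]) (auto simp: abs_mult h)
  have e1: "(\<integral>y. p1 x y \<partial>lborel) = f x * (\<integral>y. (if y \<le> x then h y else 0) \<partial>lborel)" for x
    unfolding p1_def by simp
  have e2: "(\<integral>x. p2 x y \<partial>lborel) = h y * (\<integral>x. (if x \<le> y then f x else 0) \<partial>lborel)" for y
  proof -
    have "(\<integral>x. p2 x y \<partial>lborel) = (\<integral>x. (if x < y then f x else 0) \<partial>lborel) * h y"
      unfolding p2_def by simp
    also have "(\<integral>x. (if x < y then f x else 0) \<partial>lborel) = (\<integral>x. (if x \<le> y then f x else 0) \<partial>lborel)"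
    proof (rule integral_cong_AE)
      show "AE x in lborel. (if x < y then f x else 0) = (if x \<le> y then f x else 0)"
        using AE_lborel_singleton[of y] by eventually_elim auto
    qed auto
    finally show ?thesis by simp
  qed
  have "(\<integral>x. f x \<partial>lborel) * (\<integral>x. h x \<partial>lborel) = (\<integral>x. (\<integral>y. f x * h y \<partial>lborel) \<partial>lborel)"
    by simp
  also have "\<dots> = (\<integral>x. (\<integral>y. p1 x y + p2 x y \<partial>lborel) \<partial>lborel)"
    by (intro Bochner_Integration.integral_cong refl) (auto simp: p1_def p2_def)
  also have "\<dots> = (\<integral>x. (\<integral>y. p1 x y \<partial>lborel) + (\<integral>y. p2 x y \<partial>lborel) \<partial>lborel)"
    using i1 i2 by simp
  also have "\<dots> = (\<integral>x. (\<integral>y. p1 x y \<partial>lborel) \<partial>lborel) + (\<integral>x. (\<integral>y. p2 x y \<partial>lborel) \<partial>lborel)"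
    by (rule Bochner_Integration.integral_add) (rule lborel_pair.integrable_fst[OF P1], rule lborel_pair.integrable_fst[OF P2])
  also have "(\<integral>x. (\<integral>y. p2 x y \<partial>lborel) \<partial>lborel) = (\<integral>y. (\<integral>x. p2 x y \<partial>lborel) \<partial>lborel)"
    using lborel_pair.Fubini_integral[OF P2] by simp
  also have "(\<integral>x. (\<integral>y. p1 x y \<partial>lborel) \<partial>lborel) + (\<integral>y. (\<integral>x. p2 x y \<partial>lborel) \<partial>lborel)
     = (\<integral>x. (\<integral>y. p1 x y \<partial>lborel) + (\<integral>y. p2 y x \<partial>lborel) \<partial>lborel)"
    by (rule Bochner_Integration.integral_add[symmetric]) (rule lborel_pair.integrable_fst[OF P1], rule lborel_pair.integrable_snd[OF P2])
  finally show ?thesis unfolding e1 e2 by simp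
qed

definition acr :: "real \<Rightarrow> (real \<Rightarrow> real) \<Rightarrow> (real \<Rightarrow> real) \<Rightarrow> bool" where
  "acr T U u \<longleftrightarrow> set_integrable lborel {0..T} u \<and> (\<forall>t\<in>{0..T}. U t = U 0 + (LBINT s:{0..t}. u s))"

lemma indef_cont:
  fixes u :: "real \<Rightarrow> real"
  assumes "set_integrable lborel {0..T} u"
  shows "continuous_on {0..T} (\<lambda>t. LBINT s:{0..t}. u s)"
proof -
  have "u integrable_on {0..T}" using set_borel_integral_eq_integral(1)[OF assms] .
  then have c: "continuous_on {0..T} (\<lambda>t. integral {0..t} u)"
    by (rule indefinite_integral_continuous_1)
  show ?thesis
  proof (rule continuous_on_eq[OF c])
    fix t assume "t \<in> {0..T}"
    then have "set_integrable lborel {0..t} u"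
      by (intro set_integrable_subset[OF assms]) auto
    then show "integral {0..t} u = (LBINT s:{0..t}. u s)"
      by (simp add: set_borel_integral_eq_integral(2))
  qed
qed

lemma acr_cont:
  assumes "acr T U u" shows "continuous_on {0..T} U"
proof -
  have i: "set_integrable lborel {0..T} u" and e: "\<And>t. t \<in> {0..T} \<Longrightarrow> U t = U 0 + (LBINT s:{0..t}. u s)"
    using assms unfolding acr_def by blast+
  have "continuous_on {0..T} (\<lambda>t. U 0 + (LBINT s:{0..t}. u s))"
    by (rule continuous_on_add[OF continuous_on_const indef_cont[OF i]])
  then show ?thesis
    by (rule continuous_on_eq) (rule e[symmetric])
qed

lemma cont_bdd:
  fixes V :: "real \<Rightarrow> real"
  assumes "continuous_on {0..T} V"
  obtains B where "\<And>t. t \<in> {0..T} \<Longrightarrow> \<bar>V t\<bar> \<le> B"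
proof -
  have "compact (V ` {0..T})" by (rule compact_continuous_image[OF assms]) simp
  then obtain B where B: "\<forall>x\<in>V ` {0..T}. norm x \<le> B" using compact_imp_bounded bounded_iff by metis
  show ?thesis
  proof (rule that)
    fix t :: real assume "t \<in> {0..T}" then show "\<bar>V t\<bar> \<le> B" using B by auto
  qed
qed

lemma bdd_mult_int:
  fixes u V :: "real \<Rightarrow> real"
  assumes u: "set_integrable lborel {0..T} u" and V: "continuous_on {0..T} V"
  shows "set_integrable lborel {0..T} (\<lambda>s. V s * u s)"
proof -
  obtain B where B: "\<And>t. t \<in> {0..T} \<Longrightarrow> \<bar>V t\<bar> \<le> B" using cont_bdd[OF V] by blast
  have m: "(\<lambda>x. indicator {0..T} x *\<^sub>R V x) \<in> borel_measurable borel"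
    by (rule borel_measurable_continuous_on_indicator[OF _ V]) simp
  have um: "(\<lambda>x. indicator {0..T} x *\<^sub>R u x) \<in> borel_measurable borel"
    using u unfolding set_integrable_def by auto
  have "integrable lborel (\<lambda>x. B * (indicator {0..T} x *\<^sub>R u x))"
    using u unfolding set_integrable_def by auto
  then show ?thesis
    unfolding set_integrable_def
  proof (rule Bochner_Integration.integrable_bound)
    have "(\<lambda>x. (indicator {0..T} x *\<^sub>R V x) * (indicator {0..T} x *\<^sub>R u x)) \<in> borel_measurable borel"
      using m um by (rule borel_measurable_times)
    moreover have "(\<lambda>x. (indicator {0..T} x *\<^sub>R V x) * (indicator {0..T} x *\<^sub>R u x)) = (\<lambda>x. indicator {0..T} x *\<^sub>R (V x * u x))"
      by (auto simp: fun_eq_iff indicator_def)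
    ultimately show "(\<lambda>x. indicator {0..T} x *\<^sub>R (V x * u x)) \<in> borel_measurable lborel" by simp
    show "AE x in lborel. norm (indicator {0..T} x *\<^sub>R (V x * u x)) \<le> norm (B * (indicator {0..T} x *\<^sub>R u x))"
    proof (rule AE_I2)
      fix x show "norm (indicator {0..T} x *\<^sub>R (V x * u x)) \<le> norm (B * (indicator {0..T} x *\<^sub>R u x))"
      proof (cases "x \<in> {0..T}")
        case True then have "\<bar>V x\<bar> \<le> B" by (rule B)
        then have "\<bar>V x\<bar> * \<bar>u x\<bar> \<le> \<bar>B\<bar> * \<bar>u x\<bar>" by (intro mult_right_mono) auto
        then show ?thesis using True by (simp add: abs_mult)
      qed simp
    qed
  qed
qed

lemma acr_mult:
  assumes U: "acr T U u" and V: "acr T V v"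
  shows "acr T (\<lambda>t. U t * V t) (\<lambda>s. u s * V s + v s * U s)"
proof -
  have iu: "set_integrable lborel {0..T} u" and eU: "\<And>t. t \<in> {0..T} \<Longrightarrow> U t = U 0 + (LBINT s:{0..t}. u s)"
    using U unfolding acr_def by blast+
  have iv: "set_integrable lborel {0..T} v" and eV: "\<And>t. t \<in> {0..T} \<Longrightarrow> V t = V 0 + (LBINT s:{0..t}. v s)"
    using V unfolding acr_def by blast+
  have cU: "continuous_on {0..T} U" by (rule acr_cont[OF U])
  have cV: "continuous_on {0..T} V" by (rule acr_cont[OF V])
  have i1: "set_integrable lborel {0..T} (\<lambda>s. u s * (V s - V 0))"
    using bdd_mult_int[OF iu continuous_on_diff[OF cV continuous_on_const]] by (simp add: mult.commute)
  have i2: "set_integrable lborel {0..T} (\<lambda>s. v s * (U s - U 0))"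
    using bdd_mult_int[OF iv continuous_on_diff[OF cU continuous_on_const]] by (simp add: mult.commute)
  have i3: "set_integrable lborel {0..T} (\<lambda>s. u s * V s + v s * U s)"
    using bdd_mult_int[OF iu cV] bdd_mult_int[OF iv cU] by (simp add: mult.commute)
  show ?thesis unfolding acr_def
  proof (intro conjI ballI i3)
    fix t assume t: "t \<in> {0..T}"
    have sub: "{0..t} \<subseteq> {0..T}" using t by auto
    have iut: "set_integrable lborel {0..t} u" by (rule set_integrable_subset[OF iu _ sub]) simp
    have ivt: "set_integrable lborel {0..t} v" by (rule set_integrable_subset[OF iv _ sub]) simp
    have i1t: "set_integrable lborel {0..t} (\<lambda>s. u s * (V s - V 0))" by (rule set_integrable_subset[OF i1 _ sub]) simp
    have i2t: "set_integrable lborel {0..t} (\<lambda>s. v s * (U s - U 0))" by (rule set_integrable_subset[OF i2 _ sub]) simp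
    define fi where "fi x = indicator {0..t} x * u x" for x
    define hi where "hi x = indicator {0..t} x * v x" for x
    have fi: "integrable lborel fi" using iut unfolding set_integrable_def fi_def by simp
    have hi: "integrable lborel hi" using ivt unfolding set_integrable_def hi_def by simp
    have core: "(\<integral>x. fi x * (\<integral>y. (if y \<le> x then hi y else 0) \<partial>lborel) + hi x * (\<integral>y. (if y \<le> x then fi y else 0) \<partial>lborel) \<partial>lborel)
     = (\<integral>x. fi x \<partial>lborel) * (\<integral>x. hi x \<partial>lborel)"
      by (rule ibp_core[OF fi hi])
    have L: "(\<integral>x. fi x * (\<integral>y. (if y \<le> x then hi y else 0) \<partial>lborel) + hi x * (\<integral>y. (if y \<le> x then fi y else 0) \<partial>lborel) \<partial>lborel)
       = (LBINT x:{0..t}. u x * (V x - V 0) + v x * (U x - U 0))"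
      unfolding set_lebesgue_integral_def
    proof (rule Bochner_Integration.integral_cong[OF refl])
      fix x
      show "fi x * (\<integral>y. (if y \<le> x then hi y else 0) \<partial>lborel) + hi x * (\<integral>y. (if y \<le> x then fi y else 0) \<partial>lborel)
         = indicator {0..t} x *\<^sub>R (u x * (V x - V 0) + v x * (U x - U 0))"
      proof (cases "x \<in> {0..t}")
        case True
        then have xT: "x \<in> {0..T}" using sub by auto
        have a: "(\<integral>y. (if y \<le> x then hi y else 0) \<partial>lborel) = V x - V 0"
        proof -
          have "(\<integral>y. (if y \<le> x then hi y else 0) \<partial>lborel) = (LBINT y:{0..x}. v y)"
            unfolding set_lebesgue_integral_def hi_def
            by (rule Bochner_Integration.integral_cong[OF refl]) (use True in \<open>auto simp: indicator_def\<close>)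
          also have "\<dots> = V x - V 0" using eV[OF xT] by simp
          finally show ?thesis .
        qed
        have b: "(\<integral>y. (if y \<le> x then fi y else 0) \<partial>lborel) = U x - U 0"
        proof -
          have "(\<integral>y. (if y \<le> x then fi y else 0) \<partial>lborel) = (LBINT y:{0..x}. u y)"
            unfolding set_lebesgue_integral_def fi_def
            by (rule Bochner_Integration.integral_cong[OF refl]) (use True in \<open>auto simp: indicator_def\<close>)
          also have "\<dots> = U x - U 0" using eU[OF xT] by simp
          finally show ?thesis .
        qed
        show ?thesis unfolding a b using True by (simp add: fi_def hi_def)
      qed (simp add: fi_def hi_def)
    qed
    have R: "(\<integral>x. fi x \<partial>lborel) * (\<integral>x. hi x \<partial>lborel) = (U t - U 0) * (V t - V 0)"
    proof -
      have "(\<integral>x. fi x \<partial>lborel) = U t - U 0" using eU[OF t] unfolding fi_def set_lebesgue_integral_def by simp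
      moreover have "(\<integral>x. hi x \<partial>lborel) = V t - V 0" using eV[OF t] unfolding hi_def set_lebesgue_integral_def by simp
      ultimately show ?thesis by simp
    qed
    have "(LBINT s:{0..t}. u s * V s + v s * U s)
        = (LBINT s:{0..t}. (u s * (V s - V 0) + v s * (U s - U 0)) + (V 0 * u s + U 0 * v s))"
      by (rule set_lebesgue_integral_cong) (auto simp: algebra_simps)
    also have "\<dots> = (LBINT s:{0..t}. u s * (V s - V 0) + v s * (U s - U 0)) + (LBINT s:{0..t}. V 0 * u s + U 0 * v s)"
      by (rule set_integral_add(2)) (auto intro!: set_integral_add i1t i2t iut ivt)
    also have "(LBINT s:{0..t}. V 0 * u s + U 0 * v s) = V 0 * (LBINT s:{0..t}. u s) + U 0 * (LBINT s:{0..t}. v s)"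
      by (subst set_integral_add(2)) (auto intro!: iut ivt)
    finally have "(LBINT s:{0..t}. u s * V s + v s * U s) = (U t - U 0) * (V t - V 0) + V 0 * (U t - U 0) + U 0 * (V t - V 0)"
      using L core R eU[OF t] eV[OF t] by simp
    then show "U t * V t = U 0 * V 0 + (LBINT s:{0..t}. u s * V s + v s * U s)"
      by (simp add: algebra_simps)
  qed
qed

lemma acr_I:
  assumes "set_integrable lborel {0..T} u" "\<And>t. t \<in> {0..T} \<Longrightarrow> U t = U 0 + (LBINT s:{0..t}. u s)"
  shows "acr T U u"
  using assms unfolding acr_def by blast

lemma acr_D:
  assumes "acr T U u"
  shows "set_integrable lborel {0..T} u" "\<And>t. t \<in> {0..T} \<Longrightarrow> U t = U 0 + (LBINT s:{0..t}. u s)"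
  using assms unfolding acr_def by blast+

lemma acr_const: "acr T (\<lambda>_. c) (\<lambda>_. 0)"
  by (rule acr_I) (auto simp: set_integrable_def)

lemma acr_cong:
  assumes "acr T U u" "\<And>t. t \<in> {0..T} \<Longrightarrow> U' t = U t" "\<And>s. s \<in> {0..T} \<Longrightarrow> u' s = u s"
  shows "acr T U' u'"
proof (rule acr_I)
  have i: "set_integrable lborel {0..T} u" using acr_D(1)[OF assms(1)] .
  show "set_integrable lborel {0..T} u'"
    using i by (rule iffD1[OF set_integrable_cong, rotated -1]) (auto simp: assms(3))
  fix t assume t: "t \<in> {0..T}"
  have "(LBINT s:{0..t}. u' s) = (LBINT s:{0..t}. u s)"
    by (rule set_lebesgue_integral_cong) (use t in \<open>auto simp: assms(3)\<close>)
  moreover have "U' 0 = U 0" using t by (intro assms(2)) auto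
  moreover have "U' t = U t" using t by (rule assms(2))
  ultimately show "U' t = U' 0 + (LBINT s:{0..t}. u' s)"
    using acr_D(2)[OF assms(1) t] by simp
qed

lemma acr_add:
  assumes "acr T U u" "acr T V v"
  shows "acr T (\<lambda>t. U t + V t) (\<lambda>s. u s + v s)"
proof (rule acr_I)
  note iu = acr_D(1)[OF assms(1)] and iv = acr_D(1)[OF assms(2)]
  show "set_integrable lborel {0..T} (\<lambda>s. u s + v s)" using iu iv by (rule set_integral_add(1))
  fix t assume t: "t \<in> {0..T}"
  have iut: "set_integrable lborel {0..t} u" by (rule set_integrable_subset[OF iu]) (use t in auto)
  have ivt: "set_integrable lborel {0..t} v" by (rule set_integrable_subset[OF iv]) (use t in auto)
  show "U t + V t = U 0 + V 0 + (LBINT s:{0..t}. u s + v s)"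
    using acr_D(2)[OF assms(1) t] acr_D(2)[OF assms(2) t] set_integral_add(2)[OF iut ivt] by simp
qed

lemma acr_cmult:
  assumes "acr T U u"
  shows "acr T (\<lambda>t. c * U t) (\<lambda>s. c * u s)"
proof (rule acr_I)
  note iu = acr_D(1)[OF assms(1)]
  show "set_integrable lborel {0..T} (\<lambda>s. c * u s)" using iu by auto
  fix t assume t: "t \<in> {0..T}"
  show "c * U t = c * U 0 + (LBINT s:{0..t}. c * u s)"
    using acr_D(2)[OF assms(1) t] by (simp add: algebra_simps)
qed

lemma acr_pow:
  assumes "acr T U u"
  shows "acr T (\<lambda>t. U t ^ Suc n) (\<lambda>s. real (Suc n) * u s * U s ^ n)"
proof (induction n)
  case 0
  show ?case using assms by (rule acr_cong) auto
next
  case (Suc n)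
  have "acr T (\<lambda>t. U t * U t ^ Suc n) (\<lambda>s. u s * U s ^ Suc n + real (Suc n) * u s * U s ^ n * U s)"
    by (rule acr_mult[OF assms Suc])
  then show ?case
    by (rule acr_cong) (auto simp: algebra_simps)
qed

definition Sx :: "nat \<Rightarrow> real \<Rightarrow> real" where
  "Sx N x = (\<Sum>n<N. x ^ n / fact n)"

lemma acr_Sx:
  assumes "acr T U u"
  shows "acr T (\<lambda>t. Sx (Suc N) (U t)) (\<lambda>s. u s * Sx N (U s))"
proof (induction N)
  case 0
  show ?case by (rule acr_cong[OF acr_const[of T 1]]) (auto simp: Sx_def)
next
  case (Suc N)
  have "acr T (\<lambda>t. Sx (Suc N) (U t) + (1 / fact (Suc N)) * U t ^ Suc N)
              (\<lambda>s. u s * Sx N (U s) + (1 / fact (Suc N)) * (real (Suc N) * u s * U s ^ N))"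
    by (intro acr_add Suc acr_cmult acr_pow assms)
  then show ?case
  proof (rule acr_cong)
    fix t show "Sx (Suc (Suc N)) (U t) = Sx (Suc N) (U t) + 1 / fact (Suc N) * U t ^ Suc N"
      unfolding Sx_def by simp
    fix s show "u s * Sx (Suc N) (U s) = u s * Sx N (U s) + 1 / fact (Suc N) * (real (Suc N) * u s * U s ^ N)"
    proof -
      have f: "(fact N::real) > 0" by simp
      have "1 / fact (Suc N) * (real (Suc N) * u s * U s ^ N) = u s * (U s ^ N / fact N)"
        using f by (simp add: fact_Suc field_simps del: of_nat_Suc)
      then show ?thesis unfolding Sx_def by (simp add: algebra_simps)
    qed
  qed
qed

lemma Sx_lim: "(\<lambda>N. Sx N x) \<longlonglongrightarrow> exp x"
  using exp_converges[of x] unfolding sums_def Sx_def by (simp add: divide_inverse mult.commute)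

lemma Sx_bound: "\<bar>Sx N x\<bar> \<le> exp \<bar>x\<bar>"
proof -
  have "\<bar>Sx N x\<bar> \<le> (\<Sum>n<N. \<bar>x\<bar> ^ n / fact n)"
    unfolding Sx_def by (rule order_trans[OF sum_abs]) (simp add: power_abs)
  also have "\<dots> \<le> (\<Sum>n. \<bar>x\<bar> ^ n / fact n)"
    by (rule sum_le_suminf) (use exp_converges[of "\<bar>x\<bar>"] in \<open>auto simp: sums_iff divide_inverse mult.commute\<close>)
  also have "\<dots> = exp \<bar>x\<bar>"
    using exp_converges[of "\<bar>x\<bar>"] by (simp add: sums_iff divide_inverse mult.commute)
  finally show ?thesis .
qed

lemma acr_exp:
  assumes U: "acr T U u"
  shows "acr T (\<lambda>t. exp (U t)) (\<lambda>s. u s * exp (U s))"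
proof (rule acr_I)
  note iu = acr_D(1)[OF U] and eU = acr_D(2)[OF U]
  have cU: "continuous_on {0..T} U" by (rule acr_cont[OF U])
  obtain B where B: "\<And>t. t \<in> {0..T} \<Longrightarrow> \<bar>U t\<bar> \<le> B" using cont_bdd[OF cU] by blast
  have ce: "continuous_on {0..T} (\<lambda>s. exp (U s))" by (intro continuous_intros cU)
  show ie: "set_integrable lborel {0..T} (\<lambda>s. u s * exp (U s))"
    using bdd_mult_int[OF iu ce] by (simp add: mult.commute)
  have cS: "continuous_on {0..T} (\<lambda>s. Sx N (U s))" for N
    unfolding Sx_def by (intro continuous_intros cU) auto
  have iS: "set_integrable lborel {0..T} (\<lambda>s. u s * Sx N (U s))" for N
    using bdd_mult_int[OF iu cS] by (simp add: mult.commute)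
  fix t assume t: "t \<in> {0..T}"
  have sub: "{0..t} \<subseteq> {0..T}" using t by auto
  have iut: "set_integrable lborel {0..t} u" by (rule set_integrable_subset[OF iu _ sub]) simp
  have iet: "set_integrable lborel {0..t} (\<lambda>s. u s * exp (U s))" by (rule set_integrable_subset[OF ie _ sub]) simp
  have iSt: "set_integrable lborel {0..t} (\<lambda>s. u s * Sx N (U s))" for N by (rule set_integrable_subset[OF iS _ sub]) simp
  have eqN: "Sx (Suc N) (U t) = Sx (Suc N) (U 0) + (LBINT s:{0..t}. u s * Sx N (U s))" for N
    using acr_D(2)[OF acr_Sx[OF U, of N] t] .
  have L1: "(\<lambda>N. Sx (Suc N) (U t)) \<longlonglongrightarrow> exp (U t)"
    using Sx_lim by (rule LIMSEQ_Suc)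
  have L2: "(\<lambda>N. Sx (Suc N) (U 0)) \<longlonglongrightarrow> exp (U 0)"
    using Sx_lim by (rule LIMSEQ_Suc)
  have L3: "(\<lambda>N. LBINT s:{0..t}. u s * Sx N (U s)) \<longlonglongrightarrow> (LBINT s:{0..t}. u s * exp (U s))"
    unfolding set_lebesgue_integral_def
  proof (rule integral_dominated_convergence[where w="\<lambda>x. exp B * norm (indicator {0..t} x *\<^sub>R u x)"])
    show "(\<lambda>x. indicator {0..t} x *\<^sub>R (u x * exp (U x))) \<in> borel_measurable lborel"
      using iet unfolding set_integrable_def by auto
    show "(\<lambda>x. indicator {0..t} x *\<^sub>R (u x * Sx N (U x))) \<in> borel_measurable lborel" for N
      using iSt[of N] unfolding set_integrable_def by auto
    show "integrable lborel (\<lambda>x. exp B * norm (indicator {0..t} x *\<^sub>R u x))"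
      using iut unfolding set_integrable_def by (intro integrable_mult_right integrable_norm)
    show "AE x in lborel. (\<lambda>N. indicator {0..t} x *\<^sub>R (u x * Sx N (U x))) \<longlonglongrightarrow> indicator {0..t} x *\<^sub>R (u x * exp (U x))"
      by (intro AE_I2 tendsto_intros Sx_lim)
    show "AE x in lborel. norm (indicator {0..t} x *\<^sub>R (u x * Sx N (U x))) \<le> exp B * norm (indicator {0..t} x *\<^sub>R u x)" for N
    proof (rule AE_I2)
      fix x show "norm (indicator {0..t} x *\<^sub>R (u x * Sx N (U x))) \<le> exp B * norm (indicator {0..t} x *\<^sub>R u x)"
      proof (cases "x \<in> {0..t}")
        case True
        then have "\<bar>U x\<bar> \<le> B" using sub by (intro B) auto
        then have "\<bar>Sx N (U x)\<bar> \<le> exp B" using Sx_bound[of N "U x"] by (meson exp_le_cancel_iff order_trans)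
        then have "\<bar>u x\<bar> * \<bar>Sx N (U x)\<bar> \<le> \<bar>u x\<bar> * exp B" by (intro mult_left_mono) auto
        then show ?thesis using True by (simp add: abs_mult mult.commute)
      qed simp
    qed
  qed
  have "(\<lambda>N. Sx (Suc N) (U 0) + (LBINT s:{0..t}. u s * Sx N (U s))) \<longlonglongrightarrow> exp (U 0) + (LBINT s:{0..t}. u s * exp (U s))"
    by (intro tendsto_add L2 L3)
  then have "(\<lambda>N. Sx (Suc N) (U t)) \<longlonglongrightarrow> exp (U 0) + (LBINT s:{0..t}. u s * exp (U s))"
    by (simp add: eqN)
  then show "exp (U t) = exp (U 0) + (LBINT s:{0..t}. u s * exp (U s))"
    using L1 LIMSEQ_unique by blast
qed

lemma acr_smooth:
  fixes f f' :: "real \<Rightarrow> real"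
  assumes d: "\<And>s. s \<in> {0..T} \<Longrightarrow> (f has_real_derivative f' s) (at s within {0..T})"
    and c: "continuous_on {0..T} f'"
  shows "acr T f f'"
proof (rule acr_I)
  show i: "set_integrable lborel {0..T} f'" by (rule borel_integrable_atLeastAtMost'[OF c])
  fix t assume t: "t \<in> {0..T}"
  have sub: "{0..t} \<subseteq> {0..T}" using t by auto
  have it: "set_integrable lborel {0..t} f'" by (rule set_integrable_subset[OF i _ sub]) simp
  have "(f' has_integral (f t - f 0)) {0..t}"
  proof (rule fundamental_theorem_of_calculus)
    show "0 \<le> t" using t by simp
    fix x assume x: "x \<in> {0..t}"
    have "(f has_real_derivative f' x) (at x within {0..t})"
      using d[of x] x sub by (auto intro: DERIV_subset)
    then show "(f has_vector_derivative f' x) (at x within {0..t})"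
      by (simp add: has_real_derivative_iff_has_vector_derivative)
  qed
  then have "integral {0..t} f' = f t - f 0" by (rule integral_unique)
  then show "f t = f 0 + (LBINT s:{0..t}. f' s)"
    using set_borel_integral_eq_integral(2)[OF it] by simp
qed

lemma acr_lin: "acr T (\<lambda>t. T - t + 1) (\<lambda>_. -1)"
  by (rule acr_smooth) (auto intro!: derivative_eq_intros)

lemma acr_q:
  assumes "T \<ge> 0"
  shows "acr T (\<lambda>t. 1 / (T - t + 1)) (\<lambda>s. 1 / (T - s + 1)^2)"
proof (rule acr_smooth)
  fix s assume s: "s \<in> {0..T}"
  then have "T - s + 1 \<noteq> 0" by auto
  then show "((\<lambda>t. 1 / (T - t + 1)) has_real_derivative 1 / (T - s + 1)^2) (at s within {0..T})"
    by (auto intro!: derivative_eq_intros simp: power2_eq_square field_simps)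
next
  show "continuous_on {0..T} (\<lambda>s. 1 / (T - s + 1)^2)"
    by (intro continuous_intros) auto
qed

lemma exp_strict: "x \<noteq> 0 \<Longrightarrow> 1 + x < exp (x::real)"
proof -
  assume x: "x \<noteq> 0"
  show ?thesis
  proof (cases "1 + x / 2 \<ge> 0")
    case True
    have "(1 + x/2)^2 \<le> exp (x/2) ^ 2"
      using True exp_ge_add_one_self[of "x/2"] by (intro power_mono) auto
    also have "exp (x/2) ^ 2 = exp x" by (simp add: exp_double[symmetric] power2_eq_square exp_add[symmetric])
    finally have "1 + x + x^2/4 \<le> exp x" by (simp add: power2_eq_square field_simps)
    moreover have "x^2/4 > 0" using x by simp
    ultimately show ?thesis by linarith
  next
    case False
    then have "1 + x < 0" by simp
    then show ?thesis using exp_gt_zero[of x] by linarith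
  qed
qed

lemma int_point: "(LBINT s:{c}. f s) = (0::real)"
  unfolding set_lebesgue_integral_def
  by (rule integral_eq_zero_AE) (use AE_lborel_singleton[of c] in \<open>auto elim!: eventually_mono\<close>)

lemma int_point0: "(LBINT s:{(c::real)..c}. f s) = (0::real)"
  using int_point[of c f] by (metis atLeastAtMost_singleton)

lemma int_split:
  fixes g :: "real \<Rightarrow> real"
  assumes ig: "set_integrable lborel {0..T} g" and t: "t \<in> {0..T}"
  shows "(LBINT s:{0..T}. g s) = (LBINT s:{0..t}. g s) + (LBINT s:{t..T}. g s)"
proof -
  have "{0..T} = {0..t} \<union> {t..T}" using t by auto
  then have "(LBINT s:{0..T}. g s) = (LBINT s:{0..t} \<union> {t..T}. g s)" by simp
  also have "\<dots> = (LBINT s:{0..t}. g s) + (LBINT s:{t..T}. g s)"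
  proof (rule set_integral_Un_AE)
    show "AE x in lborel. \<not> (x \<in> {0..t} \<and> x \<in> {t..T})"
      using AE_lborel_singleton[of t] by eventually_elim auto
    show "set_integrable lborel {0..t} g" by (rule set_integrable_subset[OF ig]) (use t in auto)
    show "set_integrable lborel {t..T} g" by (rule set_integrable_subset[OF ig]) (use t in auto)
  qed auto
  finally show ?thesis .
qed

lemma acr_G:
  fixes g :: "real \<Rightarrow> real"
  assumes ig: "set_integrable lborel {0..T} g"
  shows "acr T (\<lambda>t. LBINT s:{t..T}. g s) (\<lambda>s. - g s)"
proof (rule acr_I)
  show "set_integrable lborel {0..T} (\<lambda>s. - g s)" using ig unfolding set_integrable_def by simp
  fix t assume t: "t \<in> {0..T}"
  have it: "set_integrable lborel {0..t} g" by (rule set_integrable_subset[OF ig]) (use t in auto)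
  show "(LBINT s:{t..T}. g s) = (LBINT s:{0..T}. g s) + (LBINT s:{0..t}. - g s)"
    using int_split[OF ig t] set_integral_uminus[OF it] by simp
qed

lemma acr_X:
  fixes i :: "real \<Rightarrow> real"
  assumes ii: "set_integrable lborel {0..T} i"
  shows "acr T (\<lambda>t. LBINT s:{0..t}. i s) i"
  by (rule acr_I[OF ii]) (simp add: int_point)

lemma int_cont_comb:
  fixes g V1 V2 :: "real \<Rightarrow> real"
  assumes "set_integrable lborel {0..T} g" "continuous_on {0..T} V1" "continuous_on {0..T} V2"
  shows "set_integrable lborel {0..T} (\<lambda>t. V1 t * g t + V2 t)"
  by (rule set_integral_add(1)[OF bdd_mult_int[OF assms(1,2)] borel_integrable_atLeastAtMost'[OF assms(3)]])

lemma key: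
  fixes g D :: "real \<Rightarrow> real" and a T :: real
  assumes T: "T > 0" and a: "a > 0"
    and ig: "set_integrable lborel {0..T} g"
    and ii: "set_integrable lborel {0..T} (\<lambda>s. - a * (1 / (T - s + 1)) * (g s - D s))"
    and io: "set_integrable lborel {0..T} (\<lambda>t. exp (LBINT s:{0..t}. - a * (1 / (T - s + 1)) * (g s - D s))
                 * (1 / (T - t + 1) * (g t - D t) + - exp (- a * D t) / a))"
  defines "Ds \<equiv> \<lambda>t. 1 / (T - t + 1) * (LBINT s:{t..T}. g s)"
  shows "\<exists>\<rho>. set_integrable lborel {0..T} \<rho> \<and> (\<forall>s\<in>{0..T}. 0 \<le> \<rho> s \<and> (\<rho> s = 0 \<longleftrightarrow> D s = Ds s)) \<and>
     (LBINT t:{0..T}. exp (LBINT s:{0..t}. - a * (1 / (T - s + 1)) * (g s - D s))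
                 * (1 / (T - t + 1) * (g t - D t) + - exp (- a * D t) / a))
       = 1 / a * (1 - (T + 1) * exp (- a / (T + 1) * (LBINT s:{0..T}. g s))) - (LBINT s:{0..T}. \<rho> s) / a"
proof -
  define q where "q s = 1 / (T - s + 1)" for s
  define i where "i s = - a * (1 / (T - s + 1)) * (g s - D s)" for s
  define X where "X t = (LBINT s:{0..t}. i s)" for t
  define G where "G t = (LBINT s:{t..T}. g s)" for t
  define Y where "Y t = X t + (- a) * Ds t" for t
  define y where "y s = i s + (- a) * (q s ^ 2 * G s + - g s * q s)" for s
  define Ou where "Ou t = exp (X t) * (1 / (T - t + 1) * (g t - D t) + - exp (- a * D t) / a)" for t
  define \<phi> where "\<phi> s = -1 * exp (Y s) + y s * exp (Y s) * (T - s + 1)" for s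
  define \<rho> where "\<rho> s = exp (Y s) * (a * (D s - Ds s) - 1 + exp (- (a * (D s - Ds s))))" for s
  have Ds_eq: "Ds t = q t * G t" for t unfolding Ds_def q_def G_def by simp
  have ii': "set_integrable lborel {0..T} i" using ii unfolding i_def .
  have aX: "acr T X i" unfolding X_def by (rule acr_X[OF ii'])
  have aG: "acr T G (\<lambda>s. - g s)" unfolding G_def by (rule acr_G[OF ig])
  have aq: "acr T q (\<lambda>s. q s ^ 2)" unfolding q_def using acr_q[of T] T by (simp add: power_one_over)
  have aDs: "acr T Ds (\<lambda>s. q s ^ 2 * G s + - g s * q s)"
    using acr_mult[OF aq aG] by (simp add: Ds_eq[abs_def])
  have aY: "acr T Y y"
    unfolding Y_def[abs_def] y_def[abs_def] by (intro acr_add aX acr_cmult aDs)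
  have aEY: "acr T (\<lambda>t. exp (Y t)) (\<lambda>s. y s * exp (Y s))" by (rule acr_exp[OF aY])
  have aPhi: "acr T (\<lambda>t. (T - t + 1) * exp (Y t)) \<phi>"
    unfolding \<phi>_def[abs_def] by (rule acr_mult[OF acr_lin aEY])
  have aE: "acr T (\<lambda>t. exp (X t)) (\<lambda>s. i s * exp (X s))" by (rule acr_exp[OF aX])
  have X0: "X 0 = 0" unfolding X_def by (simp add: int_point)
  have GT: "G T = 0" unfolding G_def by (rule int_point0)
  have G0: "G 0 = (LBINT s:{0..T}. g s)" unfolding G_def ..
  have yT: "y s * (T - s + 1) = a * (D s - Ds s)" if s: "s \<in> {0..T}" for s
  proof -
    have ne: "T - s + 1 \<noteq> 0" using s by auto
    have qc: "q s * (T - s + 1) = 1" unfolding q_def using ne by simp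
    have "y s * (T - s + 1) = i s * (T - s + 1) - a * (q s * G s) * (q s * (T - s + 1)) + a * g s * (q s * (T - s + 1))"
      unfolding y_def by (simp add: algebra_simps power2_eq_square)
    also have "i s * (T - s + 1) = - a * (g s - D s) * (q s * (T - s + 1))"
      unfolding i_def q_def using ne by (simp add: field_simps)
    finally show ?thesis unfolding qc Ds_eq by (simp add: algebra_simps)
  qed
  have phi_eq: "\<phi> s = exp (Y s) * (a * (D s - Ds s) - 1)" if s: "s \<in> {0..T}" for s
  proof -
    have "\<phi> s = exp (Y s) * (y s * (T - s + 1) - 1)" unfolding \<phi>_def by (simp add: algebra_simps)
    then show ?thesis using yT[OF s] by simp
  qed
  have XD: "exp (X s) * exp (- a * D s) = exp (Y s) * exp (- (a * (D s - Ds s)))" for s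
    unfolding Y_def by (simp add: exp_add[symmetric] algebra_simps)
  have Ou_eq: "Ou t = - (1 / a) * (i t * exp (X t)) - (1 / a) * (exp (X t) * exp (- a * D t))" for t
  proof -
    have h: "E * (c * (gg - dd) + - e / a) = - (1 / a) * ((- a * c * (gg - dd)) * E) - (1 / a) * (E * e)" for c E e gg dd :: real
      using a by (simp add: field_simps)
    show ?thesis unfolding Ou_def i_def by (rule h)
  qed
  have io': "set_integrable lborel {0..T} Ou" using io unfolding Ou_def X_def i_def .
  have iiE: "set_integrable lborel {0..T} (\<lambda>s. i s * exp (X s))" by (rule acr_D(1)[OF aE])
  have iphi: "set_integrable lborel {0..T} \<phi>" by (rule acr_D(1)[OF aPhi])
  have kE: "exp (X t) * exp (- a * D t) = (- a) * Ou t - i t * exp (X t)" for t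
    unfolding Ou_eq using a by (simp add: field_simps)
  have iK: "set_integrable lborel {0..T} (\<lambda>s. exp (X s) * exp (- a * D s))"
    unfolding kE by (intro set_integral_diff(1) set_integrable_mult_right io' iiE)
  have rhOu_eq: "\<rho> s = \<phi> s + exp (X s) * exp (- a * D s)" if "s \<in> {0..T}" for s
    unfolding phi_eq[OF that] XD \<rho>_def by (simp add: algebra_simps)
  have irho: "set_integrable lborel {0..T} \<rho>"
    using set_integral_add(1)[OF iphi iK] by (rule iffD1[OF set_integrable_cong, rotated -1]) (auto simp: rhOu_eq)
  have Irho: "(LBINT s:{0..T}. \<rho> s) = (LBINT s:{0..T}. \<phi> s) + (LBINT s:{0..T}. exp (X s) * exp (- a * D s))"
  proof -
    have "(LBINT s:{0..T}. \<rho> s) = (LBINT s:{0..T}. \<phi> s + exp (X s) * exp (- a * D s))"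
      by (rule set_lebesgue_integral_cong) (auto simp: rhOu_eq)
    then show ?thesis using set_integral_add(2)[OF iphi iK] by simp
  qed
  have Tin: "T \<in> {0..T}" using T by simp
  have Iphi: "(LBINT s:{0..T}. \<phi> s) = exp (X T) - (T + 1) * exp (Y 0)"
  proof -
    have "(T - T + 1) * exp (Y T) = (T - 0 + 1) * exp (Y 0) + (LBINT s:{0..T}. \<phi> s)"
      by (rule acr_D(2)[OF aPhi Tin])
    moreover have "Y T = X T" unfolding Y_def Ds_eq GT by simp
    ultimately show ?thesis by simp
  qed
  have IiE: "(LBINT s:{0..T}. i s * exp (X s)) = exp (X T) - 1"
    using acr_D(2)[OF aE Tin] X0 by simp
  have Io: "(LBINT s:{0..T}. Ou s) = - (1 / a) * (LBINT s:{0..T}. i s * exp (X s)) - (1 / a) * (LBINT s:{0..T}. exp (X s) * exp (- a * D s))"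
  proof -
    have "(LBINT s:{0..T}. Ou s) = (LBINT s:{0..T}. - (1 / a) * (i s * exp (X s)) - (1 / a) * (exp (X s) * exp (- a * D s)))"
      unfolding Ou_eq ..
    also have "\<dots> = (LBINT s:{0..T}. - (1 / a) * (i s * exp (X s))) - (LBINT s:{0..T}. (1 / a) * (exp (X s) * exp (- a * D s)))"
      by (rule set_integral_diff(2)) (intro set_integrable_mult_right iiE iK)+
    finally show ?thesis by (simp only: set_integral_mult_right)
  qed
  have Y0: "Y 0 = - a / (T + 1) * (LBINT s:{0..T}. g s)"
    unfolding Y_def X0 Ds_eq q_def G0 by simp
  have main: "(LBINT s:{0..T}. Ou s) = 1 / a * (1 - (T + 1) * exp (- a / (T + 1) * (LBINT s:{0..T}. g s))) - (LBINT s:{0..T}. \<rho> s) / a"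
    unfolding Io IiE Irho Iphi Y0[symmetric] using a by (simp add: field_simps)
  have pos: "0 \<le> \<rho> s \<and> (\<rho> s = 0 \<longleftrightarrow> D s = Ds s)" for s
  proof -
    define u where "u = a * (D s - Ds s)"
    have r: "\<rho> s = exp (Y s) * (u - 1 + exp (- u))" unfolding \<rho>_def u_def ..
    have nn: "0 \<le> u - 1 + exp (- u)" using exp_ge_add_one_self[of "- u"] by simp
    have z: "u - 1 + exp (- u) = 0 \<longleftrightarrow> u = 0"
    proof
      assume h: "u - 1 + exp (- u) = 0"
      show "u = 0"
      proof (rule ccontr)
        assume "u \<noteq> 0" then have "1 + (- u) < exp (- u)" by (intro exp_strict) simp
        with h show False by simp
      qed
    qed simp
    have "u = 0 \<longleftrightarrow> D s = Ds s" unfolding u_def using a by simp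
    then show ?thesis using nn z r by (simp add: mult_nonneg_nonneg)
  qed
  show ?thesis
    apply (rule exI[of _ \<rho>])
    using irho pos main unfolding Ou_def X_def i_def by auto
qed

theorem theorem5p7:
  fixes eps T a :: real and C :: "'n::finite triple set"
    and Theta :: "real \<Rightarrow> 'n triple set" and kappa :: "real \<Rightarrow> real"
    and theta :: "real \<Rightarrow> 'n triple" and Pol :: "real \<Rightarrow> real^'n"
  assumes "standing eps T C Theta kappa"
    and "a > 0"
    and "\<forall>t\<in>{0..T}. \<forall>(b, S, F)\<in>Theta t.
           b \<bullet> (matrix_inv S *v b) \<le> 2 * qf T t * (1 - ln (qf T t))"
    and "theta_sel eps T C Theta theta"
    and "Pol \<in> borel_measurable (restrict_space borel {0..T})"
    and "set_integrable lborel {0..T} (\<lambda>s. hloc a T s (theta s) (Pol s))"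
  defines "Dstar \<equiv> (\<lambda>t. qf T t * (LBINT s:{t..T}. hloc a T s (theta s) (Pol s)))"
  shows "admissible_D a T Pol Dstar theta
    \<and> (\<forall>D. admissible_D a T Pol D theta \<longrightarrow>
          Hglob a T Pol D theta \<le> Hglob a T Pol Dstar theta
          \<and> (Hglob a T Pol D theta = Hglob a T Pol Dstar theta \<longrightarrow>
               (AE t in lborel. t \<in> {0..T} \<longrightarrow> D t = Dstar t)))
    \<and> Hglob a T Pol Dstar theta
        = 1 / a * (1 - (T + 1) * exp (- a / (T + 1) * (LBINT s:{0..T}. hloc a T s (theta s) (Pol s))))"
proof -
  define g where "g s = hloc a T s (theta s) (Pol s)" for s
  have T: "T > 0" using assms(1) unfolding standing_def by blast
  have a: "a > 0" by (rule assms(2))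
  have ig: "set_integrable lborel {0..T} g" using assms(6) unfolding g_def .
  define R where "R = 1 / a * (1 - (T + 1) * exp (- a / (T + 1) * (LBINT s:{0..T}. g s)))"
  have Ds: "Dstar = (\<lambda>t. 1 / (T - t + 1) * (LBINT s:{t..T}. g s))"
    unfolding Dstar_def qf_def g_def ..
  have HG: "Hglob a T Pol D theta = (LBINT t:{0..T}. exp (LBINT s:{0..t}. - a * (1 / (T - s + 1)) * (g s - D s))
                 * (1 / (T - t + 1) * (g t - D t) + - exp (- a * D t) / a))" for D
    unfolding Hglob_def outer_int_def inner_int_def qf_def Uexp_def g_def ..
  have AD: "admissible_D a T Pol D theta \<longleftrightarrow> D \<in> borel_measurable (restrict_space borel {0..T}) \<and>
       set_integrable lborel {0..T} (\<lambda>s. - a * (1 / (T - s + 1)) * (g s - D s)) \<and>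
       set_integrable lborel {0..T} (\<lambda>t. exp (LBINT s:{0..t}. - a * (1 / (T - s + 1)) * (g s - D s))
                 * (1 / (T - t + 1) * (g t - D t) + - exp (- a * D t) / a))" for D
    unfolding admissible_D_def outer_int_def inner_int_def qf_def Uexp_def g_def ..
  have aDs: "acr T Dstar (\<lambda>s. (1 / (T - s + 1)) ^ 2 * (LBINT r:{s..T}. g r) + - g s * (1 / (T - s + 1)))"
    unfolding Ds using acr_mult[OF acr_q acr_G[OF ig]] T by (simp add: power_one_over)
  have cDs: "continuous_on {0..T} Dstar" by (rule acr_cont[OF aDs])
  have cq: "continuous_on {0..T} (\<lambda>s. 1 / (T - s + 1))" by (intro continuous_intros) auto
  have adm: "admissible_D a T Pol Dstar theta"
    unfolding AD
  proof (intro conjI)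
    show "Dstar \<in> borel_measurable (restrict_space borel {0..T})"
      by (rule borel_measurable_continuous_on_restrict[OF cDs])
    have i1: "set_integrable lborel {0..T} (\<lambda>s. (- a * (1 / (T - s + 1))) * g s + (a * (1 / (T - s + 1)) * Dstar s))"
      by (rule int_cont_comb[OF ig]) (intro continuous_intros cq cDs)+
    show ii: "set_integrable lborel {0..T} (\<lambda>s. - a * (1 / (T - s + 1)) * (g s - Dstar s))"
      using i1 by (rule iffD1[OF set_integrable_cong, rotated -1]) (auto simp: right_diff_distrib)
    define X where "X t = (LBINT s:{0..t}. - a * (1 / (T - s + 1)) * (g s - Dstar s))" for t
    have cX: "continuous_on {0..T} X" unfolding X_def by (rule acr_cont[OF acr_X[OF ii]])
    have i2: "set_integrable lborel {0..T} (\<lambda>t. (exp (X t) * (1 / (T - t + 1))) * g t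
       + exp (X t) * (- (1 / (T - t + 1)) * Dstar t + - exp (- a * Dstar t) / a))"
    proof (rule int_cont_comb[OF ig])
      show "continuous_on {0..T} (\<lambda>t. exp (X t) * (1 / (T - t + 1)))"
        by (intro continuous_on_mult continuous_on_exp cX cq)
      show "continuous_on {0..T} (\<lambda>t. exp (X t) * (- (1 / (T - t + 1)) * Dstar t + - exp (- a * Dstar t) / a))"
        using a by (intro continuous_intros cq cDs cX) auto
    qed
    show "set_integrable lborel {0..T} (\<lambda>t. exp (LBINT s:{0..t}. - a * (1 / (T - s + 1)) * (g s - Dstar s))
                 * (1 / (T - t + 1) * (g t - Dstar t) + - exp (- a * Dstar t) / a))"
    proof -
      have h: "E * (c * (gg - dd) + - e / a) = (E * c) * gg + E * (- c * dd + - e / a)" for E c gg dd e :: real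
        by (simp add: algebra_simps)
      show ?thesis
        using i2 unfolding X_def h .
    qed
  qed
  have keyD: "\<exists>\<rho>. set_integrable lborel {0..T} \<rho> \<and> (\<forall>s\<in>{0..T}. 0 \<le> \<rho> s \<and> (\<rho> s = 0 \<longleftrightarrow> D s = Dstar s)) \<and>
     Hglob a T Pol D theta = R - (LBINT s:{0..T}. \<rho> s) / a" if "admissible_D a T Pol D theta" for D
    using key[OF T a ig, of D] that unfolding AD HG R_def Ds by blast
  have HDs: "Hglob a T Pol Dstar theta = R"
  proof -
    obtain \<rho> where r: "set_integrable lborel {0..T} \<rho>" "\<forall>s\<in>{0..T}. 0 \<le> \<rho> s \<and> (\<rho> s = 0 \<longleftrightarrow> Dstar s = Dstar s)"
      "Hglob a T Pol Dstar theta = R - (LBINT s:{0..T}. \<rho> s) / a"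
      using keyD[OF adm] by blast
    have "(LBINT s:{0..T}. \<rho> s) = (LBINT s:{0..T}. 0)"
      by (rule set_lebesgue_integral_cong) (use r(2) in auto)
    then show ?thesis using r(3) by simp
  qed
  have part2: "Hglob a T Pol D theta \<le> Hglob a T Pol Dstar theta
          \<and> (Hglob a T Pol D theta = Hglob a T Pol Dstar theta \<longrightarrow>
               (AE t in lborel. t \<in> {0..T} \<longrightarrow> D t = Dstar t))" if AD0: "admissible_D a T Pol D theta" for D
  proof -
    obtain \<rho> where r: "set_integrable lborel {0..T} \<rho>" "\<forall>s\<in>{0..T}. 0 \<le> \<rho> s \<and> (\<rho> s = 0 \<longleftrightarrow> D s = Dstar s)"
      "Hglob a T Pol D theta = R - (LBINT s:{0..T}. \<rho> s) / a"
      using keyD[OF AD0] by blast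
    have nn: "0 \<le> (LBINT s:{0..T}. \<rho> s)"
      unfolding set_lebesgue_integral_def by (rule Bochner_Integration.integral_nonneg) (use r(2) in \<open>auto simp: indicator_def\<close>)
    have le: "Hglob a T Pol D theta \<le> Hglob a T Pol Dstar theta"
      unfolding HDs r(3) using nn a by simp
    have ae: "AE t in lborel. t \<in> {0..T} \<longrightarrow> D t = Dstar t"
      if eq: "Hglob a T Pol D theta = Hglob a T Pol Dstar theta"
    proof -
      have z: "(LBINT s:{0..T}. \<rho> s) = 0" using eq unfolding HDs r(3) using a by simp
      have "AE x in lborel. indicator {0..T} x *\<^sub>R \<rho> x = 0"
      proof (subst integral_nonneg_eq_0_iff_AE[symmetric])
        show "integrable lborel (\<lambda>x. indicator {0..T} x *\<^sub>R \<rho> x)" using r(1) unfolding set_integrable_def .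
        show "AE x in lborel. 0 \<le> indicator {0..T} x *\<^sub>R \<rho> x"
          by (rule AE_I2) (use r(2) in \<open>auto simp: indicator_def\<close>)
        show "(\<integral>x. indicator {0..T} x *\<^sub>R \<rho> x \<partial>lborel) = 0" using z unfolding set_lebesgue_integral_def .
      qed
      then show ?thesis
        by eventually_elim (use r(2) in \<open>auto simp: indicator_def split: if_splits\<close>)
    qed
    show ?thesis using le ae by blast
  qed
  show ?thesis
    using adm part2 HDs unfolding R_def g_def by blast
qed

end
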